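(* Let $A\in\mathbb Z^{d\times n}$ with $\ker(A)\cap\mathbb N^n=\{0\}$. Let $\mathcal B$ be the set of minimal distance reducing Markov bases of $A$ and $\mathcal B^s$ the set of minimal strongly distance reducing Markov bases. Then, with elements of $\ker(A)$ identified with their negatives, $D(A)=\bigcap_{B\in\mathcal B}B$ and $D^w(A)=\bigcap_{B\in\mathcal B^s}B$; i.e., a nonzero $z\in\ker(A)$ lies in $D(A)$ if and only if $z\in B$ or $-z\in B$ for every $B\in\mathcal B$, and lies in $D^w(A)$ if and only if $z\in B$ or $-z\in B$ for every $B\in\mathcal B^s$.
   Context: For $z\in\mathbb Z^n$, $z^\pm\in\mathbb N^n$ are the unique vectors with disjoint supports and $z=z^+-z^-$; $\|\cdot\|$ is the $1$-norm; $\le$ is coordinatewise. A positive (resp. negative) distance decomposition of $z\in\ker(A)$ is $z=u+v$ with $u,v\in\ker(A)\setminus\{0\}$, $u^+\le z^+$ (resp. $u^-\le z^-$) and $\|v\|<\|z\|$. $D^+(A)$ (resp. $D^-(A)$) is the set of nonzero $z\in\ker(A)$ with no positive (resp. negative) distance decomposition; $D(A)=D^+(A)\cap D^-(A)$, $D^w(A)=D^+(A)\cup D^-(A)$. For nonzero $z\in\ker(A)$: $u$ reduces $z$ from $z^+$ if some $\varepsilon\in\{\pm1\}$ has $z^++\varepsilon u\in\mathbb N^n$ and $\|z^++\varepsilon u-z^-\|<\|z\|$; from $z^-$ if some $\varepsilon$ has $z^-+\varepsilon u\in\mathbb N^n$ and $\|z^+-(z^-+\varepsilon u)\|<\|z\|$.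 $B\subseteq\ker(A)$ is distance reducing if each nonzero $z$ is reduced from $z^+$ or $z^-$ by some element of $B$; strongly distance reducing if each nonzero $z$ is reduced from $z^+$ by some element of $B$ and from $z^-$ by some element of $B$. A minimal (strongly) distance reducing Markov basis is a (strongly) distance reducing set no proper subset of which is (strongly) distance reducing. *)

theory Defs
  imports "HOL-Analysis.Analysis"
begin

text \<open>Integer vectors in Z^n are modelled as int ^ 'n (n = CARD('n)); the
integer matrix A in Z^(d x n) as int ^ 'n ^ 'd, acting by matrix-vector product.\<close>

definition kerZ :: "int ^ 'n ^ 'd \<Rightarrow> (int ^ 'n) set" where
  "kerZ A = {z. A *v z = 0}"

definition natvec :: "int ^ 'n \<Rightarrow> bool" where
  "natvec v \<longleftrightarrow> (\<forall>i. 0 \<le> v $ i)"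

definition leq_vec :: "int ^ 'n \<Rightarrow> int ^ 'n \<Rightarrow> bool" where
  "leq_vec u v \<longleftrightarrow> (\<forall>i. u $ i \<le> v $ i)"

definition norm1 :: "int ^ 'n \<Rightarrow> int" where
  "norm1 z = (\<Sum>i\<in>UNIV. \<bar>z $ i\<bar>)"

definition posp :: "int ^ 'n \<Rightarrow> int ^ 'n" where
  "posp z = (\<chi> i. max (z $ i) 0)"

definition negp :: "int ^ 'n \<Rightarrow> int ^ 'n" where
  "negp z = (\<chi> i. max (- (z $ i)) 0)"

definition pos_dist_decomp :: "int ^ 'n ^ 'd \<Rightarrow> int ^ 'n \<Rightarrow> int ^ 'n \<Rightarrow> int ^ 'n \<Rightarrow> bool" where
  "pos_dist_decomp A z u v \<longleftrightarrow> z = u + v \<and> u \<in> kerZ A \<and> v \<in> kerZ A \<and> u \<noteq> 0 \<and> v \<noteq> 0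
     \<and> leq_vec (posp u) (posp z) \<and> norm1 v < norm1 z"

definition neg_dist_decomp :: "int ^ 'n ^ 'd \<Rightarrow> int ^ 'n \<Rightarrow> int ^ 'n \<Rightarrow> int ^ 'n \<Rightarrow> bool" where
  "neg_dist_decomp A z u v \<longleftrightarrow> z = u + v \<and> u \<in> kerZ A \<and> v \<in> kerZ A \<and> u \<noteq> 0 \<and> v \<noteq> 0
     \<and> leq_vec (negp u) (negp z) \<and> norm1 v < norm1 z"

definition Dplus :: "int ^ 'n ^ 'd \<Rightarrow> (int ^ 'n) set" where
  "Dplus A = {z \<in> kerZ A. z \<noteq> 0 \<and> \<not> (\<exists>u v. pos_dist_decomp A z u v)}"

definition Dminus :: "int ^ 'n ^ 'd \<Rightarrow> (int ^ 'n) set" where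
  "Dminus A = {z \<in> kerZ A. z \<noteq> 0 \<and> \<not> (\<exists>u v. neg_dist_decomp A z u v)}"

definition Dset :: "int ^ 'n ^ 'd \<Rightarrow> (int ^ 'n) set" where
  "Dset A = Dplus A \<inter> Dminus A"

definition Dw :: "int ^ 'n ^ 'd \<Rightarrow> (int ^ 'n) set" where
  "Dw A = Dplus A \<union> Dminus A"

definition reduces_plus :: "int ^ 'n \<Rightarrow> int ^ 'n \<Rightarrow> bool" where
  "reduces_plus u z \<longleftrightarrow> (\<exists>\<epsilon>\<in>{1, -1::int}.
      natvec (posp z + \<epsilon> *s u) \<and> norm1 (posp z + \<epsilon> *s u - negp z) < norm1 z)"

definition reduces_minus :: "int ^ 'n \<Rightarrow> int ^ 'n \<Rightarrow> bool" where
  "reduces_minus u z \<longleftrightarrow> (\<exists>\<epsilon>\<in>{1, -1::int}.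
      natvec (negp z + \<epsilon> *s u) \<and> norm1 (posp z - (negp z + \<epsilon> *s u)) < norm1 z)"

definition dist_reducing :: "int ^ 'n ^ 'd \<Rightarrow> (int ^ 'n) set \<Rightarrow> bool" where
  "dist_reducing A B \<longleftrightarrow> B \<subseteq> kerZ A \<and>
     (\<forall>z\<in>kerZ A. z \<noteq> 0 \<longrightarrow> (\<exists>u\<in>B. reduces_plus u z \<or> reduces_minus u z))"

definition strongly_dist_reducing :: "int ^ 'n ^ 'd \<Rightarrow> (int ^ 'n) set \<Rightarrow> bool" where
  "strongly_dist_reducing A B \<longleftrightarrow> B \<subseteq> kerZ A \<and>
     (\<forall>z\<in>kerZ A. z \<noteq> 0 \<longrightarrow> (\<exists>u\<in>B. reduces_plus u z) \<and> (\<exists>u\<in>B. reduces_minus u z))"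

definition minimal_dist_reducing :: "int ^ 'n ^ 'd \<Rightarrow> (int ^ 'n) set \<Rightarrow> bool" where
  "minimal_dist_reducing A B \<longleftrightarrow> dist_reducing A B \<and> (\<forall>B'. B' \<subset> B \<longrightarrow> \<not> dist_reducing A B')"

definition minimal_strongly_dist_reducing :: "int ^ 'n ^ 'd \<Rightarrow> (int ^ 'n) set \<Rightarrow> bool" where
  "minimal_strongly_dist_reducing A B \<longleftrightarrow> strongly_dist_reducing A B \<and>
     (\<forall>B'. B' \<subset> B \<longrightarrow> \<not> strongly_dist_reducing A B')"

end

theory Submission
  imports Defs
begin


lemma chain_inter_meets:
  assumes fin: "finite R" and ne: "C \<noteq> {}"
    and ch: "\<forall>X\<in>C. \<forall>Y\<in>C. X \<subseteq> Y \<or> Y \<subseteq> X"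
    and meet: "\<forall>B\<in>C. B \<inter> R \<noteq> {}"
  shows "\<Inter>C \<inter> R \<noteq> {}"
proof -
  obtain B where B: "B \<in> C" "\<forall>B'\<in>C. card (B \<inter> R) \<le> card (B' \<inter> R)"
  proof -
    obtain B0 where "B0 \<in> C" using ne by blast
    from arg_min_nat_lemma[of "\<lambda>B. B \<in> C", OF this, of "\<lambda>B. card (B \<inter> R)"]
    show ?thesis using that by blast
  qed
  have "B \<inter> R \<subseteq> B'" if "B' \<in> C" for B'
  proof (cases "B \<subseteq> B'")
    case True then show ?thesis by blast
  next
    case False
    then have "B' \<subseteq> B" using ch B(1) that by blast
    then have s: "B' \<inter> R \<subseteq> B \<inter> R" by blast
    have "card (B \<inter> R) \<le> card (B' \<inter> R)" using B(2) that by blast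
    then have "B' \<inter> R = B \<inter> R" using card_subset_eq[OF _ s] fin
      by (metis card_mono inf_le2 infinite_super le_antisym s)
    then show ?thesis by blast
  qed
  then have "B \<inter> R \<subseteq> \<Inter>C \<inter> R" by blast
  then show ?thesis using meet B(1) by blast
qed

lemma exists_minimal:
  assumes P0: "P B0"
    and ch: "\<And>C. C \<noteq> {} \<Longrightarrow> (\<forall>X\<in>C. X \<subseteq> B0 \<and> P X) \<Longrightarrow> (\<forall>X\<in>C. \<forall>Y\<in>C. X \<subseteq> Y \<or> Y \<subseteq> X) \<Longrightarrow> P (\<Inter>C)"
  shows "\<exists>B\<subseteq>B0. P B \<and> (\<forall>B'. B' \<subset> B \<longrightarrow> \<not> P B')"
proof -
  define F where "F = {B0 - B | B. B \<subseteq> B0 \<and> P B}"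
  have Fne: "F \<noteq> {}" using P0 unfolding F_def by blast
  have "\<Union>\<C> \<in> F" if "\<C> \<noteq> {}" "subset.chain F \<C>" for \<C>
  proof -
    define C' where "C' = (\<lambda>X. B0 - X) ` \<C>"
    have sub: "\<C> \<subseteq> F" and tot: "\<forall>X\<in>\<C>. \<forall>Y\<in>\<C>. X \<subseteq> Y \<or> Y \<subseteq> X"
      using that(2) unfolding subset_chain_def by auto
    have a: "\<forall>X\<in>C'. X \<subseteq> B0 \<and> P X"
    proof
      fix X assume "X \<in> C'"
      then obtain Y where Y: "Y \<in> \<C>" "X = B0 - Y" unfolding C'_def by blast
      then obtain B where "Y = B0 - B" "B \<subseteq> B0" "P B" using sub unfolding F_def by blast
      then have "X = B" using Y by blast
      then show "X \<subseteq> B0 \<and> P X" using \<open>B \<subseteq> B0\<close> \<open>P B\<close> by simp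
    qed
    have b: "\<forall>X\<in>C'. \<forall>Y\<in>C'. X \<subseteq> Y \<or> Y \<subseteq> X"
      using tot unfolding C'_def by blast
    have "P (\<Inter>C')" using ch[OF _ a b] that(1) unfolding C'_def by blast
    moreover have "\<Inter>C' \<subseteq> B0" using a that(1) unfolding C'_def by blast
    moreover have "\<Union>\<C> = B0 - \<Inter>C'"
    proof -
      have "\<forall>Y\<in>\<C>. Y \<subseteq> B0" using sub unfolding F_def by blast
      then show ?thesis unfolding C'_def using that(1) by blast
    qed
    ultimately show ?thesis unfolding F_def by blast
  qed
  then obtain M where M: "M \<in> F" "\<forall>X\<in>F. M \<subseteq> X \<longrightarrow> X = M"
    using subset_Zorn_nonempty[OF Fne] by blast
  then obtain B where B: "M = B0 - B" "B \<subseteq> B0" "P B" unfolding F_def by blast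
  have "\<not> P B'" if "B' \<subset> B" for B'
  proof
    assume "P B'"
    then have "B0 - B' \<in> F" using that B(2) unfolding F_def by blast
    moreover have "M \<subseteq> B0 - B'" using B that by blast
    ultimately have "B0 - B' = B0 - B" using M B by blast
    then show False using that B(2) by blast
  qed
  then show ?thesis using B by blast
qed



lemma posp_nth[simp]: "posp z $ i = max (z $ i) 0" by (simp add: posp_def)
lemma negp_nth[simp]: "negp z $ i = max (- (z $ i)) 0" by (simp add: negp_def)

lemma norm1_uminus[simp]: "norm1 (- x) = norm1 x" by (simp add: norm1_def)
lemma norm1_zero[simp]: "norm1 0 = 0" by (simp add: norm1_def)
lemma norm1_comp: "\<bar>x $ i\<bar> \<le> norm1 x"
  unfolding norm1_def by (rule member_le_sum) auto
lemma norm1_pos: "x \<noteq> 0 \<Longrightarrow> norm1 x > 0"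
proof -
  assume "x \<noteq> 0"
  then obtain i where "x $ i \<noteq> 0" by (auto simp: vec_eq_iff)
  then show ?thesis using norm1_comp[of x i] by simp
qed
lemma norm1_double: "norm1 (x + x) \<ge> norm1 x"
  unfolding norm1_def by (rule sum_mono) auto
lemma norm1_diff_comm: "norm1 (x - y) = norm1 (y - x)"
  by (metis minus_diff_eq norm1_uminus)

lemma smult_one: "(1::int) *s u = u" by (simp add: vec_eq_iff)
lemma smult_mone: "(-1::int) *s u = - u" by (simp add: vec_eq_iff)

lemma rp_iff: "reduces_plus u w \<longleftrightarrow>
   (natvec (posp w + u) \<and> norm1 (w + u) < norm1 w) \<or> (natvec (posp w - u) \<and> norm1 (w - u) < norm1 w)"
proof -
  have e1: "posp w + u - negp w = w + u" by (auto simp: vec_eq_iff)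
  have e2: "posp w - u - negp w = w - u" by (auto simp: vec_eq_iff)
  show ?thesis unfolding reduces_plus_def by (auto simp: smult_one smult_mone e1 e2)
qed

lemma rm_iff: "reduces_minus u w \<longleftrightarrow>
   (natvec (negp w + u) \<and> norm1 (w - u) < norm1 w) \<or> (natvec (negp w - u) \<and> norm1 (w + u) < norm1 w)"
proof -
  have e1: "posp w - (negp w + u) = w - u" by (auto simp: vec_eq_iff)
  have e2: "posp w - (negp w - u) = w + u" by (auto simp: vec_eq_iff)
  show ?thesis unfolding reduces_minus_def by (auto simp: smult_one smult_mone e1 e2)
qed

lemma ker_add: "x \<in> kerZ A \<Longrightarrow> y \<in> kerZ A \<Longrightarrow> x + y \<in> kerZ A"
  by (simp add: kerZ_def matrix_vector_right_distrib)
lemma ker_diff: "x \<in> kerZ A \<Longrightarrow> y \<in> kerZ A \<Longrightarrow> x - y \<in> kerZ A"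
  by (simp add: kerZ_def matrix_vector_mult_diff_distrib)
lemma ker_uminus: "x \<in> kerZ A \<Longrightarrow> - x \<in> kerZ A"
  using ker_diff[of 0 A x] by (simp add: kerZ_def)

lemma rp_self: "w \<noteq> 0 \<Longrightarrow> reduces_plus w w"
  unfolding rp_iff using norm1_pos[of w] by (auto simp: natvec_def)
lemma rm_self: "w \<noteq> 0 \<Longrightarrow> reduces_minus w w"
  unfolding rm_iff using norm1_pos[of w] by (auto simp: natvec_def)

lemma posp_neg[simp]: "posp (- w) = negp w" by (simp add: vec_eq_iff)
lemma negp_neg[simp]: "negp (- w) = posp w" by (simp add: vec_eq_iff)

lemma rp_neg: "reduces_plus u (- w) \<longleftrightarrow> reduces_minus u w"
proof -
  have "norm1 (- w + u) = norm1 (w - u)" "norm1 (- w - u) = norm1 (w + u)"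
    by (metis minus_diff_eq norm1_uminus uminus_add_conv_diff, metis add.commute minus_diff_eq norm1_uminus diff_minus_eq_add uminus_add_conv_diff)
  then show ?thesis unfolding rp_iff rm_iff by auto
qed
lemma rm_neg: "reduces_minus u (- w) \<longleftrightarrow> reduces_plus u w"
  using rp_neg[of u "- w"] by simp

lemma K1:
  assumes "u \<in> kerZ A" "w \<in> kerZ A" "reduces_plus u w" "u \<noteq> w" "u \<noteq> - w"
  shows "\<exists>a b. pos_dist_decomp A w a b"
  using assms(3) unfolding rp_iff
proof
  assume h: "natvec (posp w + u) \<and> norm1 (w + u) < norm1 w"
  have "pos_dist_decomp A w (- u) (w + u)"
    unfolding pos_dist_decomp_def
  proof (intro conjI)
    show "- u \<noteq> 0" using h by auto
    show "w + u \<noteq> 0" using assms(5) by (metis add.commute add_eq_0_iff)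
    show "leq_vec (posp (- u)) (posp w)" unfolding leq_vec_def
    proof
      fix i from h have "0 \<le> (posp w + u) $ i" unfolding natvec_def by blast
      then show "posp (- u) $ i \<le> posp w $ i" by simp
    qed
  qed (use h assms(1,2) in \<open>auto intro: ker_add ker_uminus\<close>)
  then show ?thesis by blast
next
  assume h: "natvec (posp w - u) \<and> norm1 (w - u) < norm1 w"
  have "pos_dist_decomp A w u (w - u)"
    unfolding pos_dist_decomp_def
  proof (intro conjI)
    show "u \<noteq> 0" using h by auto
    show "w - u \<noteq> 0" using assms(4) by simp
    show "leq_vec (posp u) (posp w)" using h by (auto simp: leq_vec_def natvec_def)
  qed (use h assms(1,2) in \<open>auto intro: ker_diff\<close>)
  then show ?thesis by blast
qed

lemma K3:
  assumes "u \<in> kerZ A" "w \<in> kerZ A" "reduces_minus u w" "u \<noteq> w" "u \<noteq> - w"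
  shows "\<exists>a b. neg_dist_decomp A w a b"
  using assms(3) unfolding rm_iff
proof
  assume h: "natvec (negp w + u) \<and> norm1 (w - u) < norm1 w"
  have "neg_dist_decomp A w u (w - u)"
    unfolding neg_dist_decomp_def
  proof (intro conjI)
    show "u \<noteq> 0" using h by auto
    show "w - u \<noteq> 0" using assms(4) by simp
    show "leq_vec (negp u) (negp w)" unfolding leq_vec_def
    proof
      fix i from h have "0 \<le> (negp w + u) $ i" unfolding natvec_def by blast
      then show "negp u $ i \<le> negp w $ i" by simp
    qed
  qed (use h assms(1,2) in \<open>auto intro: ker_diff\<close>)
  then show ?thesis by blast
next
  assume h: "natvec (negp w - u) \<and> norm1 (w + u) < norm1 w"
  have "neg_dist_decomp A w (- u) (w + u)"
    unfolding neg_dist_decomp_def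
  proof (intro conjI)
    show "- u \<noteq> 0" using h by auto
    show "w + u \<noteq> 0" using assms(5) by (metis add.commute add_eq_0_iff)
    show "leq_vec (negp (- u)) (negp w)" using h by (auto simp: leq_vec_def natvec_def)
  qed (use h assms(1,2) in \<open>auto intro: ker_add ker_uminus\<close>)
  then show ?thesis by blast
qed

lemma K2:
  assumes "pos_dist_decomp A w a b"
  shows "a \<in> kerZ A \<and> a \<noteq> w \<and> a \<noteq> - w \<and> reduces_plus a w"
proof -
  have h: "w = a + b" "a \<in> kerZ A" "b \<noteq> 0" "leq_vec (posp a) (posp w)" "norm1 b < norm1 w"
    using assms unfolding pos_dist_decomp_def by auto
  have "a \<noteq> - w"
  proof
    assume "a = - w"
    then have "b = w + w" using h(1) by (metis add.commute add_diff_cancel diff_minus_eq_add)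
    then show False using norm1_double[of w] h(5) by simp
  qed
  moreover have "natvec (posp w - a)" unfolding natvec_def
  proof
    fix i from h(4) have "posp a $ i \<le> posp w $ i" unfolding leq_vec_def by blast
    then show "0 \<le> (posp w - a) $ i" by simp
  qed
  moreover have "w - a = b" using h(1) by simp
  ultimately show ?thesis using h unfolding rp_iff by auto
qed

lemma K4:
  assumes "neg_dist_decomp A w a b"
  shows "a \<in> kerZ A \<and> a \<noteq> w \<and> a \<noteq> - w \<and> reduces_minus a w"
proof -
  have h: "w = a + b" "a \<in> kerZ A" "b \<noteq> 0" "leq_vec (negp a) (negp w)" "norm1 b < norm1 w"
    using assms unfolding neg_dist_decomp_def by auto
  have "a \<noteq> - w"
  proof
    assume "a = - w"
    then have "b = w + w" using h(1) by (metis add.commute add_diff_cancel diff_minus_eq_add)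
    then show False using norm1_double[of w] h(5) by simp
  qed
  moreover have "natvec (negp w + a)" unfolding natvec_def
  proof
    fix i from h(4) have "negp a $ i \<le> negp w $ i" unfolding leq_vec_def by blast
    then show "0 \<le> (negp w + a) $ i" by simp
  qed
  moreover have "w - a = b" using h(1) by simp
  ultimately show ?thesis using h unfolding rm_iff by auto
qed

lemma red_bound:
  assumes "reduces_plus u w \<or> reduces_minus u w"
  shows "\<bar>u $ i\<bar> \<le> 2 * norm1 w"
proof -
  from assms obtain s where s: "norm1 (w + s) < norm1 w" "s = u \<or> s = - u"
    unfolding rp_iff rm_iff by (metis diff_conv_add_uminus)
  have "\<bar>(w + s) $ i\<bar> \<le> norm1 (w + s)" "\<bar>w $ i\<bar> \<le> norm1 w" by (rule norm1_comp)+
  moreover have "\<bar>u $ i\<bar> = \<bar>s $ i\<bar>" using s(2) by auto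
  ultimately show ?thesis using s(1) by simp
qed

lemma finite_box: "finite {u :: int ^ 'n. \<forall>i. \<bar>u $ i\<bar> \<le> M}"
proof -
  have "{u :: int ^ 'n. \<forall>i. \<bar>u $ i\<bar> \<le> M} \<subseteq> vec_lambda ` (PiE UNIV (\<lambda>_. {-M..M}))"
  proof
    fix u :: "int ^ 'n" assume "u \<in> {u. \<forall>i. \<bar>u $ i\<bar> \<le> M}"
    then have "vec_nth u \<in> PiE UNIV (\<lambda>_. {-M..M})" by (auto simp: abs_le_iff) (metis minus_le_iff)
    then show "u \<in> vec_lambda ` (PiE UNIV (\<lambda>_. {-M..M}))"
      by (metis image_eqI vec_lambda_eta)
  qed
  moreover have "finite (vec_lambda ` (PiE UNIV (\<lambda>_. {-M..M})) :: (int ^ 'n) set)"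
    by (intro finite_imageI finite_PiE) auto
  ultimately show ?thesis by (rule finite_subset)
qed

lemma finite_red: "finite {u. reduces_plus u w \<or> reduces_minus u w}"
  by (rule finite_subset[OF _ finite_box[of "2 * norm1 w"]]) (use red_bound in blast)


lemma dr_chain:
  assumes "C \<noteq> {}" "\<forall>X\<in>C. X \<subseteq> B0 \<and> dist_reducing A X" "\<forall>X\<in>C. \<forall>Y\<in>C. X \<subseteq> Y \<or> Y \<subseteq> X"
  shows "dist_reducing A (\<Inter>C)"
  unfolding dist_reducing_def
proof (intro conjI ballI impI)
  show "\<Inter>C \<subseteq> kerZ A" using assms(1,2) unfolding dist_reducing_def by blast
  fix w assume w: "w \<in> kerZ A" "w \<noteq> 0"
  have "\<Inter>C \<inter> {u. reduces_plus u w \<or> reduces_minus u w} \<noteq> {}"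
  proof (rule chain_inter_meets[OF finite_red assms(1,3)])
    show "\<forall>B\<in>C. B \<inter> {u. reduces_plus u w \<or> reduces_minus u w} \<noteq> {}"
      using assms(2) w unfolding dist_reducing_def by blast
  qed
  then show "\<exists>u\<in>\<Inter>C. reduces_plus u w \<or> reduces_minus u w" by blast
qed

lemma sdr_chain:
  assumes "C \<noteq> {}" "\<forall>X\<in>C. X \<subseteq> B0 \<and> strongly_dist_reducing A X" "\<forall>X\<in>C. \<forall>Y\<in>C. X \<subseteq> Y \<or> Y \<subseteq> X"
  shows "strongly_dist_reducing A (\<Inter>C)"
  unfolding strongly_dist_reducing_def
proof (intro conjI ballI impI)
  show "\<Inter>C \<subseteq> kerZ A" using assms(1,2) unfolding strongly_dist_reducing_def by blast
  fix w assume w: "w \<in> kerZ A" "w \<noteq> 0"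
  have f1: "finite {u. reduces_plus u w}" by (rule finite_subset[OF _ finite_red[of w]]) blast
  have f2: "finite {u. reduces_minus u w}" by (rule finite_subset[OF _ finite_red[of w]]) blast
  have "\<Inter>C \<inter> {u. reduces_plus u w} \<noteq> {}"
  proof (rule chain_inter_meets[OF f1 assms(1,3)])
    show "\<forall>B\<in>C. B \<inter> {u. reduces_plus u w} \<noteq> {}"
      using assms(2) w unfolding strongly_dist_reducing_def by blast
  qed
  moreover have "\<Inter>C \<inter> {u. reduces_minus u w} \<noteq> {}"
  proof (rule chain_inter_meets[OF f2 assms(1,3)])
    show "\<forall>B\<in>C. B \<inter> {u. reduces_minus u w} \<noteq> {}"
      using assms(2) w unfolding strongly_dist_reducing_def by blast
  qed
  ultimately show "\<exists>u\<in>\<Inter>C. reduces_plus u w" "\<exists>u\<in>\<Inter>C. reduces_minus u w" by blast+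
qed

lemma part1:
  assumes z: "z \<in> kerZ A" "z \<noteq> 0"
  shows "z \<in> Dset A \<longleftrightarrow> (\<forall>B. minimal_dist_reducing A B \<longrightarrow> z \<in> B \<or> - z \<in> B)"
proof
  assume D: "z \<in> Dset A"
  show "\<forall>B. minimal_dist_reducing A B \<longrightarrow> z \<in> B \<or> - z \<in> B"
  proof (intro allI impI)
    fix B assume "minimal_dist_reducing A B"
    then have B: "B \<subseteq> kerZ A" "\<exists>u\<in>B. reduces_plus u z \<or> reduces_minus u z"
      using z unfolding minimal_dist_reducing_def dist_reducing_def by auto
    then obtain u where u: "u \<in> B" "reduces_plus u z \<or> reduces_minus u z" by blast
    have "u = z \<or> u = - z"
    proof (rule ccontr)
      assume "\<not> (u = z \<or> u = - z)"
      then show False using u B(1) K1[of u A z] K3[of u A z] z D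
        unfolding Dset_def Dplus_def Dminus_def by blast
    qed
    then show "z \<in> B \<or> - z \<in> B" using u by blast
  qed
next
  assume H: "\<forall>B. minimal_dist_reducing A B \<longrightarrow> z \<in> B \<or> - z \<in> B"
  show "z \<in> Dset A"
  proof (rule ccontr)
    assume "z \<notin> Dset A"
    then have "(\<exists>a b. pos_dist_decomp A z a b) \<or> (\<exists>a b. neg_dist_decomp A z a b)"
      using z unfolding Dset_def Dplus_def Dminus_def by blast
    then obtain u0 where u0: "u0 \<in> kerZ A" "u0 \<noteq> z" "u0 \<noteq> - z" "reduces_plus u0 z \<or> reduces_minus u0 z"
      using K2 K4 by blast
    define B0 where "B0 = kerZ A - {z, - z}"
    have "dist_reducing A B0"
      unfolding dist_reducing_def
    proof (intro conjI ballI impI)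
      show "B0 \<subseteq> kerZ A" unfolding B0_def by blast
      fix w assume w: "w \<in> kerZ A" "w \<noteq> 0"
      show "\<exists>u\<in>B0. reduces_plus u w \<or> reduces_minus u w"
      proof (cases "w = z \<or> w = - z")
        case True
        then show ?thesis using u0 rp_neg[of u0 z] rm_neg[of u0 z] unfolding B0_def by blast
      next
        case False
        then show ?thesis using w rp_self[of w] unfolding B0_def by auto
      qed
    qed
    then obtain B where B: "B \<subseteq> B0" "dist_reducing A B" "\<forall>B'. B' \<subset> B \<longrightarrow> \<not> dist_reducing A B'"
      using exists_minimal[of "dist_reducing A" B0] dr_chain[of _ B0 A] by blast
    then have "minimal_dist_reducing A B" unfolding minimal_dist_reducing_def by blast
    then show False using H B(1) unfolding B0_def by blast
  qed
qed

lemma part2: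
  assumes z: "z \<in> kerZ A" "z \<noteq> 0"
  shows "z \<in> Dw A \<longleftrightarrow> (\<forall>B. minimal_strongly_dist_reducing A B \<longrightarrow> z \<in> B \<or> - z \<in> B)"
proof
  assume D: "z \<in> Dw A"
  show "\<forall>B. minimal_strongly_dist_reducing A B \<longrightarrow> z \<in> B \<or> - z \<in> B"
  proof (intro allI impI)
    fix B assume "minimal_strongly_dist_reducing A B"
    then have B: "B \<subseteq> kerZ A" "\<exists>u\<in>B. reduces_plus u z" "\<exists>u\<in>B. reduces_minus u z"
      using z unfolding minimal_strongly_dist_reducing_def strongly_dist_reducing_def by auto
    show "z \<in> B \<or> - z \<in> B"
    proof (cases "z \<in> Dplus A")
      case True
      obtain u where u: "u \<in> B" "reduces_plus u z" using B by blast
      have "u = z \<or> u = - z"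
      proof (rule ccontr)
        assume "\<not> (u = z \<or> u = - z)"
        then show False using u B(1) K1[of u A z] z True
          unfolding Dplus_def by blast
      qed
      then show ?thesis using u by blast
    next
      case False
      then have Dm: "z \<in> Dminus A" using D unfolding Dw_def by blast
      obtain u where u: "u \<in> B" "reduces_minus u z" using B by blast
      have "u = z \<or> u = - z"
      proof (rule ccontr)
        assume "\<not> (u = z \<or> u = - z)"
        then show False using u B(1) K3[of u A z] z Dm
          unfolding Dminus_def by blast
      qed
      then show ?thesis using u by blast
    qed
  qed
next
  assume H: "\<forall>B. minimal_strongly_dist_reducing A B \<longrightarrow> z \<in> B \<or> - z \<in> B"
  show "z \<in> Dw A"
  proof (rule ccontr)
    assume "z \<notin> Dw A"
    then have "(\<exists>a b. pos_dist_decomp A z a b) \<and> (\<exists>a b. neg_dist_decomp A z a b)"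
      using z unfolding Dw_def Dplus_def Dminus_def by blast
    then obtain u1 u2 where u1: "u1 \<in> kerZ A" "u1 \<noteq> z" "u1 \<noteq> - z" "reduces_plus u1 z"
      and u2: "u2 \<in> kerZ A" "u2 \<noteq> z" "u2 \<noteq> - z" "reduces_minus u2 z"
      using K2 K4 by metis
    define B0 where "B0 = kerZ A - {z, - z}"
    have "strongly_dist_reducing A B0"
      unfolding strongly_dist_reducing_def
    proof (intro conjI ballI impI)
      show "B0 \<subseteq> kerZ A" unfolding B0_def by blast
      fix w assume w: "w \<in> kerZ A" "w \<noteq> 0"
      show "\<exists>u\<in>B0. reduces_plus u w"
      proof (cases "w = z \<or> w = - z")
        case True
        then show ?thesis using u1 u2 rp_neg[of u2 z] unfolding B0_def by blast
      next
        case False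
        then show ?thesis using w rp_self[of w] unfolding B0_def by auto
      qed
      show "\<exists>u\<in>B0. reduces_minus u w"
      proof (cases "w = z \<or> w = - z")
        case True
        then show ?thesis using u1 u2 rm_neg[of u1 z] unfolding B0_def by blast
      next
        case False
        then show ?thesis using w rm_self[of w] unfolding B0_def by auto
      qed
    qed
    then obtain B where B: "B \<subseteq> B0" "strongly_dist_reducing A B" "\<forall>B'. B' \<subset> B \<longrightarrow> \<not> strongly_dist_reducing A B'"
      using exists_minimal[of "strongly_dist_reducing A" B0] sdr_chain[of _ B0 A] by blast
    then have "minimal_strongly_dist_reducing A B" unfolding minimal_strongly_dist_reducing_def by blast
    then show False using H B(1) unfolding B0_def by blast
  qed
qed

theorem proposition8p5:
  fixes A :: "int ^ 'n ^ 'd"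
  assumes "kerZ A \<inter> {v. natvec v} = {0}"
  shows "\<forall>z\<in>kerZ A. z \<noteq> 0 \<longrightarrow>
           (z \<in> Dset A \<longleftrightarrow> (\<forall>B. minimal_dist_reducing A B \<longrightarrow> z \<in> B \<or> - z \<in> B)) \<and>
           (z \<in> Dw A \<longleftrightarrow> (\<forall>B. minimal_strongly_dist_reducing A B \<longrightarrow> z \<in> B \<or> - z \<in> B))"
  using part1 part2 by blast

end
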